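(* Let $(x_1,\dots,x_n)\in[c]^n$ be any token sequence. Suppose $\mathcal V=\{\boldsymbol v_k\}_{k=1}^n\in(\mathbb R^d)^n$ is a good sequence converging to $\mathcal Z=\{\boldsymbol z_x\}_{x\in[c]}$ with parameter $\gamma$, and $\boldsymbol A=\{a_{k,j}\}_{k,j\in[n]}$ is a nice attention map with parameter $\psi$ that reflects a function $f:[c]\to[c]$ in the sense that for all $k,j\in[n]$, $a_{k,j}>0$ implies $x_j=f(x_k)$. Then $\boldsymbol A\mathcal V$ is a good sequence converging to $\mathcal Z'=\{\boldsymbol z_{f(x)}\}_{x\in[c]}$ with parameter $2\gamma\psi+c(\gamma+2N)$, where $N=\max_{x\in[c]}\|\boldsymbol z_x\|$.
   Context: Good sequence (relative to the token sequence): $\{\boldsymbol u_k\}_{k=1}^n\subset\mathbb R^d$ is a good sequence converging to $\{\boldsymbol z_x\}_{x\in[c]}$ with parameter $\gamma>0$ if $\|\boldsymbol u_k-\boldsymbol z_{x_k}\|\le\gamma/\sqrt k$ for all $k\in[n]$ (Euclidean norm). Attention map: $\boldsymbol A\in\mathbb R_{\ge0}^{n\times n}$ with $a_{k,j}=0$ for $j>k$ and $\sum_{j=1}^ka_{k,j}=1$ for all $k$; nice with parameter $\psi>0$ if $\sum_{i=1}^ja_{k,i}\le\psi j/k$ for all $k\in[n]$, $j\in[k]$. $\boldsymbol A\mathcal V=\{\sum_{j=1}^na_{k,j}\boldsymbol v_j\}_{k=1}^n$. *)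

theory Defs
  imports "HOL-Analysis.Analysis"
begin

text \<open>Sequences are indexed by 1..n, tokens take values in [c] = {1..c}.\<close>

definition good_seq ::
  "nat \<Rightarrow> (nat \<Rightarrow> nat) \<Rightarrow> (nat \<Rightarrow> 'a::real_normed_vector) \<Rightarrow> (nat \<Rightarrow> 'a) \<Rightarrow> real \<Rightarrow> bool" where
  "good_seq n x u z \<gamma> \<longleftrightarrow> \<gamma> > 0 \<and>
     (\<forall>k\<in>{1..n}. norm (u k - z (x k)) \<le> \<gamma> / sqrt (real k))"

definition attention_map :: "nat \<Rightarrow> (nat \<Rightarrow> nat \<Rightarrow> real) \<Rightarrow> bool" where
  "attention_map n A \<longleftrightarrow>
     (\<forall>k\<in>{1..n}. \<forall>j\<in>{1..n}. A k j \<ge> 0) \<and>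
     (\<forall>k\<in>{1..n}. \<forall>j\<in>{1..n}. j > k \<longrightarrow> A k j = 0) \<and>
     (\<forall>k\<in>{1..n}. (\<Sum>j=1..k. A k j) = 1)"

definition nice_attention :: "nat \<Rightarrow> (nat \<Rightarrow> nat \<Rightarrow> real) \<Rightarrow> real \<Rightarrow> bool" where
  "nice_attention n A \<psi> \<longleftrightarrow> attention_map n A \<and> \<psi> > 0 \<and>
     (\<forall>k\<in>{1..n}. \<forall>j\<in>{1..k}. (\<Sum>i=1..j. A k i) \<le> \<psi> * real j / real k)"

definition apply_attention ::
  "nat \<Rightarrow> (nat \<Rightarrow> nat \<Rightarrow> real) \<Rightarrow> (nat \<Rightarrow> 'a::real_vector) \<Rightarrow> nat \<Rightarrow> 'a" where
  "apply_attention n A v k = (\<Sum>j=1..n. A k j *\<^sub>R v j)"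

end

theory Submission
  imports Defs
begin

lemma abel_sum:
  fixes a w :: "nat \<Rightarrow> real"
  shows "(\<Sum>j=1..m. a j * w j) = (\<Sum>j=1..m. (\<Sum>i=1..j. a i) * (w j - w (Suc j))) + (\<Sum>i=1..m. a i) * w (Suc m)"
proof (induction m)
  case 0 then show ?case by simp
next
  case (Suc m)
  then show ?case by (simp add: algebra_simps)
qed

lemma dom_sum:
  fixes a b w :: "nat \<Rightarrow> real"
  assumes "\<forall>j\<in>{1..m}. (\<Sum>i=1..j. a i) \<le> (\<Sum>i=1..j. b i)"
    and "\<forall>j\<ge>1. w (Suc j) \<le> w j" and "\<forall>j. w j \<ge> 0"
  shows "(\<Sum>j=1..m. a j * w j) \<le> (\<Sum>j=1..m. b j * w j)"
proof (cases "m = 0")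
  case True then show ?thesis by simp
next
  case False
  have "(\<Sum>j=1..m. (\<Sum>i=1..j. a i) * (w j - w (Suc j))) \<le> (\<Sum>j=1..m. (\<Sum>i=1..j. b i) * (w j - w (Suc j)))"
    by (rule sum_mono, rule mult_right_mono) (use assms in auto)
  moreover have "(\<Sum>i=1..m. a i) * w (Suc m) \<le> (\<Sum>i=1..m. b i) * w (Suc m)"
    by (rule mult_right_mono) (use assms False in auto)
  ultimately show ?thesis by (simp only: abel_sum[of a w m] abel_sum[of b w m])
qed

lemma sqrt_sum: "(\<Sum>j=1..k. 1 / sqrt (real j)) \<le> 2 * sqrt (real k)"
proof (induction k)
  case 0 then show ?case by simp
next
  case (Suc k)
  have key: "2 * sqrt (real k) + 1 / sqrt (real k + 1) \<le> 2 * sqrt (real k + 1)"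
  proof -
    have s: "sqrt (real k) * sqrt (real k + 1) \<le> real k + 1/2"
    proof -
      have "sqrt (real k) * sqrt (real k + 1) = sqrt (real k * (real k + 1))"
        by (simp add: real_sqrt_mult)
      also have "\<dots> \<le> sqrt ((real k + 1/2)^2)"
        by (rule real_sqrt_le_mono) (simp add: power2_eq_square algebra_simps)
      also have "\<dots> = real k + 1/2" by simp
      finally show ?thesis .
    qed
    have p: "sqrt (real k + 1) > 0" by simp
    have "(2 * sqrt (real k) + 1 / sqrt (real k + 1)) * sqrt (real k + 1)
          = 2 * (sqrt (real k) * sqrt (real k + 1)) + 1" using p by (simp add: field_simps)
    also have "\<dots> \<le> 2 * (real k + 1)" using s by simp
    also have "\<dots> = 2 * sqrt (real k + 1) * sqrt (real k + 1)"
      by (simp add: mult.assoc del: of_nat_Suc)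
    finally show ?thesis using p by (simp add: mult_le_cancel_right)
  qed
  show ?case using Suc key by (simp add: add.commute)
qed

theorem theorem4:
  fixes n c :: nat and x f :: "nat \<Rightarrow> nat"
    and v z :: "nat \<Rightarrow> 'a::euclidean_space"
    and A :: "nat \<Rightarrow> nat \<Rightarrow> real" and \<gamma> \<psi> :: real
  assumes "c \<ge> 1"
    and tokens: "\<forall>k\<in>{1..n}. x k \<in> {1..c}"
    and f_range: "\<forall>y\<in>{1..c}. f y \<in> {1..c}"
    and good: "good_seq n x v z \<gamma>"
    and nice: "nice_attention n A \<psi>"
    and reflects: "\<forall>k\<in>{1..n}. \<forall>j\<in>{1..n}. A k j > 0 \<longrightarrow> x j = f (x k)"
  shows "good_seq n x (apply_attention n A v) (\<lambda>y. z (f y))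
           (2 * \<gamma> * \<psi> + real c * (\<gamma> + 2 * Max ((\<lambda>y. norm (z y)) ` {1..c})))"
proof -
  define N where "N = Max ((\<lambda>y. norm (z y)) ` {1..c})"
  have N0: "N \<ge> 0"
  proof -
    have "norm (z 1) \<le> N" unfolding N_def using assms(1) by (intro Max_ge) auto
    then show ?thesis using norm_ge_zero order_trans by blast
  qed
  have g0: "\<gamma> > 0" and gb: "\<forall>k\<in>{1..n}. norm (v k - z (x k)) \<le> \<gamma> / sqrt (real k)"
    using good unfolding good_seq_def by auto
  have p0: "\<psi> > 0" and Anneg: "\<forall>k\<in>{1..n}. \<forall>j\<in>{1..n}. A k j \<ge> 0"
    and Az: "\<forall>k\<in>{1..n}. \<forall>j\<in>{1..n}. j > k \<longrightarrow> A k j = 0"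
    and A1: "\<forall>k\<in>{1..n}. (\<Sum>j=1..k. A k j) = 1"
    and Ap: "\<forall>k\<in>{1..n}. \<forall>j\<in>{1..k}. (\<Sum>i=1..j. A k i) \<le> \<psi> * real j / real k"
    using nice unfolding nice_attention_def attention_map_def by auto
  have Cge: "2 * \<gamma> * \<psi> \<le> 2 * \<gamma> * \<psi> + real c * (\<gamma> + 2 * N)"
    using g0 N0 by simp
  have Cpos: "2 * \<gamma> * \<psi> > 0" using g0 p0 by simp
  have main: "norm (apply_attention n A v k - z (f (x k))) \<le> (2 * \<gamma> * \<psi> + real c * (\<gamma> + 2 * N)) / sqrt (real k)"
    if k: "k \<in> {1..n}" for k
  proof -
    have kpos: "real k > 0" using k by simp
    have split: "{1..n} = {1..k} \<union> {k+1..n}" using k by auto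
    have zero: "\<And>g. (\<Sum>j=k+1..n. A k j * g j) = (0::real)"
      using Az k by (intro sum.neutral) auto
    have sum1: "(\<Sum>j=1..n. A k j) = 1"
    proof -
      have "(\<Sum>j=1..n. A k j) = (\<Sum>j=1..k. A k j) + (\<Sum>j=k+1..n. A k j)"
        by (subst split, rule sum.union_disjoint) auto
      also have "(\<Sum>j=k+1..n. A k j) = 0" using zero[of "\<lambda>_. 1"] by simp
      finally show ?thesis using A1 k by simp
    qed
    have eq: "apply_attention n A v k - z (f (x k)) = (\<Sum>j=1..n. A k j *\<^sub>R (v j - z (x j)))"
    proof -
      have "z (f (x k)) = (\<Sum>j=1..n. A k j) *\<^sub>R z (f (x k))" using sum1 by simp
      also have "\<dots> = (\<Sum>j=1..n. A k j *\<^sub>R z (f (x k)))" by (simp add: scaleR_sum_left)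
      also have "\<dots> = (\<Sum>j=1..n. A k j *\<^sub>R z (x j))"
      proof (rule sum.cong)
        fix j assume j: "j \<in> {1..n}"
        show "A k j *\<^sub>R z (f (x k)) = A k j *\<^sub>R z (x j)"
        proof (cases "A k j > 0")
          case True then show ?thesis using reflects k j by auto
        next
          case False then have "A k j = 0" using Anneg k j by force
          then show ?thesis by simp
        qed
      qed simp
      finally show ?thesis unfolding apply_attention_def
        by (simp add: scaleR_diff_right sum_subtractf)
    qed
    have "norm (apply_attention n A v k - z (f (x k))) \<le> (\<Sum>j=1..n. norm (A k j *\<^sub>R (v j - z (x j))))"
      unfolding eq by (rule norm_sum)
    also have "\<dots> \<le> (\<Sum>j=1..n. A k j * (\<gamma> * (1 / sqrt (real j))))"
    proof (rule sum_mono)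
      fix j assume j: "j \<in> {1..n}"
      have "norm (A k j *\<^sub>R (v j - z (x j))) = A k j * norm (v j - z (x j))"
        using Anneg k j by simp
      also have "\<dots> \<le> A k j * (\<gamma> * (1 / sqrt (real j)))"
        using gb j Anneg k by (intro mult_left_mono) auto
      finally show "norm (A k j *\<^sub>R (v j - z (x j))) \<le> A k j * (\<gamma> * (1 / sqrt (real j)))" .
    qed
    also have "\<dots> = (\<Sum>j=1..k. A k j * (\<gamma> * (1 / sqrt (real j))))"
    proof -
      have "(\<Sum>j=1..n. A k j * (\<gamma> * (1 / sqrt (real j)))) = (\<Sum>j=1..k. A k j * (\<gamma> * (1 / sqrt (real j)))) + (\<Sum>j=k+1..n. A k j * (\<gamma> * (1 / sqrt (real j))))"
        by (subst split, rule sum.union_disjoint) auto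
      then show ?thesis using zero[of "\<lambda>j. \<gamma> * (1 / sqrt (real j))"] by simp
    qed
    also have "\<dots> = \<gamma> * (\<Sum>j=1..k. A k j * (1 / sqrt (real j)))"
      by (simp add: sum_distrib_left algebra_simps)
    also have "(\<Sum>j=1..k. A k j * (1 / sqrt (real j))) \<le> (\<Sum>j=1..k. (\<psi> / real k) * (1 / sqrt (real j)))"
    proof (rule dom_sum)
      show "\<forall>j\<in>{1..k}. (\<Sum>i=1..j. A k i) \<le> (\<Sum>i=1..j. \<psi> / real k)"
        using Ap k by (auto simp: mult.commute)
      show "\<forall>j\<ge>1. 1 / sqrt (real (Suc j)) \<le> 1 / sqrt (real j)"
      proof (intro allI impI)
        fix j :: nat assume "j \<ge> 1"
        then show "1 / sqrt (real (Suc j)) \<le> 1 / sqrt (real j)"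
          by (cases "j = 0") (auto intro!: divide_left_mono)
      qed
      show "\<forall>j. 0 \<le> 1 / sqrt (real j)" by simp
    qed
    also have "(\<Sum>j=1..k. (\<psi> / real k) * (1 / sqrt (real j))) = (\<psi> / real k) * (\<Sum>j=1..k. 1 / sqrt (real j))"
      by (simp add: sum_distrib_left)
    also have "\<dots> \<le> (\<psi> / real k) * (2 * sqrt (real k))"
      using sqrt_sum[of k] p0 kpos by (intro mult_left_mono) auto
    also have "(\<psi> / real k) * (2 * sqrt (real k)) = 2 * \<psi> / sqrt (real k)"
      using kpos by (simp add: field_simps)
    finally have "norm (apply_attention n A v k - z (f (x k))) \<le> \<gamma> * (2 * \<psi> / sqrt (real k))"
      using g0 by (simp add: mult_left_mono)
    also have "\<dots> = (2 * \<gamma> * \<psi>) / sqrt (real k)" by simp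
    also have "\<dots> \<le> (2 * \<gamma> * \<psi> + real c * (\<gamma> + 2 * N)) / sqrt (real k)"
      using Cge kpos by (intro divide_right_mono) auto
    finally show ?thesis .
  qed
  show ?thesis unfolding good_seq_def N_def[symmetric]
    using main Cge Cpos by auto
qed

end
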